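(* Let $p\in[1,\infty]$, $a,b\in\mathbb{R}$ with $b\neq 0$ and $|a|\neq |b|^{1/p}$ (with the convention $|b|^{1/p}=1$ when $p=\infty$). Define linear operators $T_b, M_{a,b}: L^p(\mathbb{R})\to L^p(\mathbb{R})$ by $(T_b f)(x)=f(bx)$ and $M_{a,b}f=(I-aT_b)f$, i.e. $(M_{a,b}f)(x)=f(x)-af(bx)$. Then $T_b$ and $M_{a,b}$ are homeomorphisms from $L^p(\mathbb{R})$ onto itself. Moreover: (1) $T_b^{-1}=T_{1/b}$; (2) $\|T_b\|_p=|b|^{-1/p}$; (3) for all $f\in L^p(\mathbb{R})$, $$\left|1-\frac{|a|}{|b|^{1/p}}\right|\,\|f\|_p\le \|M_{a,b}f\|_p\le \left(1+\frac{|a|}{|b|^{1/p}}\right)\|f\|_p;$$ (4) $$M_{a,b}^{-1}=\begin{cases}\sum_{n=0}^\infty a^nT_b^n & \text{if } |a|<|b|^{1/p},\\ -\sum_{n=1}^\infty \left(\frac1a\right)^n T_{1/b}^n & \text{if } |a|>|b|^{1/p}.\end{cases}$$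
   Context: $L^p(\mathbb{R})$ is the usual Lebesgue space of real-valued functions with norm $\|\cdot\|_p$ (essential supremum norm for $p=\infty$). For a bounded linear operator $H$ on $L^p(\mathbb{R})$, $\|H\|_p=\max\{\|Hf\|_p:\|f\|_p=1\}$. By convention $|b|^{1/p}=1$ when $p=\infty$. *)

theory Defs
  imports "HOL-Probability.Probability"
begin

text \<open>Exponent p ranges over [1, infinity], modelled as an ennreal with 1 <= p;
  p = top means p = infinity.  Elements of L^p(R) are represented by
  Lebesgue-measurable real functions; equality in L^p is equality almost everywhere.\<close>

definition memLp :: "ennreal \<Rightarrow> (real \<Rightarrow> real) \<Rightarrow> bool" where
  "memLp p f \<longleftrightarrow> f \<in> borel_measurable lebesgue \<and>
     (if p = \<infinity> then esssup lebesgue (\<lambda>x. ereal \<bar>f x\<bar>) < \<infinity>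
      else (\<integral>\<^sup>+ x. ennreal (\<bar>f x\<bar> powr enn2real p) \<partial>lebesgue) < \<infinity>)"

definition Lp_norm :: "ennreal \<Rightarrow> (real \<Rightarrow> real) \<Rightarrow> real" where
  "Lp_norm p f =
     (if p = \<infinity> then real_of_ereal (esssup lebesgue (\<lambda>x. ereal \<bar>f x\<bar>))
      else (enn2real (\<integral>\<^sup>+ x. ennreal (\<bar>f x\<bar> powr enn2real p) \<partial>lebesgue))
             powr (1 / enn2real p))"

definition op_norm :: "ennreal \<Rightarrow> ((real \<Rightarrow> real) \<Rightarrow> (real \<Rightarrow> real)) \<Rightarrow> real" where
  "op_norm p H = Sup {Lp_norm p (H f) | f. memLp p f \<and> Lp_norm p f = 1}"

text \<open>H induces a homeomorphism of L^p(R) (the space of a.e.-classes) onto itself.\<close>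
definition Lp_homeomorphism :: "ennreal \<Rightarrow> ((real \<Rightarrow> real) \<Rightarrow> (real \<Rightarrow> real)) \<Rightarrow> bool" where
  "Lp_homeomorphism p H \<longleftrightarrow>
     (\<forall>f. memLp p f \<longrightarrow> memLp p (H f)) \<and>
     (\<forall>f g. memLp p f \<longrightarrow> memLp p g \<longrightarrow> (AE x in lebesgue. f x = g x)
            \<longrightarrow> (AE x in lebesgue. H f x = H g x)) \<and>
     (\<forall>f g. memLp p f \<longrightarrow> memLp p g \<longrightarrow> (AE x in lebesgue. H f x = H g x)
            \<longrightarrow> (AE x in lebesgue. f x = g x)) \<and>
     (\<forall>g. memLp p g \<longrightarrow> (\<exists>f. memLp p f \<and> (AE x in lebesgue. H f x = g x))) \<and>
     (\<forall>fs f. (\<forall>n. memLp p (fs n)) \<longrightarrow> memLp p f \<longrightarrow>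
            (\<lambda>n. Lp_norm p (\<lambda>x. fs n x - f x)) \<longlonglongrightarrow> 0 \<longrightarrow>
            (\<lambda>n. Lp_norm p (\<lambda>x. H (fs n) x - H f x)) \<longlonglongrightarrow> 0) \<and>
     (\<forall>fs f. (\<forall>n. memLp p (fs n)) \<longrightarrow> memLp p f \<longrightarrow>
            (\<lambda>n. Lp_norm p (\<lambda>x. H (fs n) x - H f x)) \<longlonglongrightarrow> 0 \<longrightarrow>
            (\<lambda>n. Lp_norm p (\<lambda>x. fs n x - f x)) \<longlonglongrightarrow> 0)"

definition bpow :: "ennreal \<Rightarrow> real \<Rightarrow> real" where
  "bpow p b = (if p = \<infinity> then 1 else \<bar>b\<bar> powr (1 / enn2real p))"

definition Top :: "real \<Rightarrow> (real \<Rightarrow> real) \<Rightarrow> (real \<Rightarrow> real)" where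
  "Top b f = (\<lambda>x. f (b * x))"

definition Mop :: "real \<Rightarrow> real \<Rightarrow> (real \<Rightarrow> real) \<Rightarrow> (real \<Rightarrow> real)" where
  "Mop a b f = (\<lambda>x. f x - a * Top b f x)"

end

theory Submission
  imports Defs
begin


lemma AE_scale:
  fixes c :: real
  assumes c: "c \<noteq> 0" and ae: "AE x in lebesgue. P x"
  shows "AE x in lebesgue. P (c * x)"
proof -
  from ae obtain N where N: "{x \<in> space lebesgue. \<not> P x} \<subseteq> N" "emeasure lebesgue N = 0" "N \<in> sets lebesgue"
    by (rule AE_E)
  have meas: "(\<lambda>y. c * y) \<in> lebesgue \<rightarrow>\<^sub>M lebesgue"
    proof -
    have "((*\<^sub>R) c :: real \<Rightarrow> real) = (\<lambda>y. c * y)" by (rule ext) simp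
    then show ?thesis using lebesgue_measurable_scaling[of c, where 'a=real] by simp
  qed
  define N' where "N' = (\<lambda>y::real. c * y) -` N"
  have "N' \<in> sets lebesgue"
    using measurable_sets[OF meas N(3)] by (simp add: N'_def)
  moreover have "N' = (\<lambda>x. (1/c) *\<^sub>R x + 0) ` N"
  proof (intro set_eqI iffI)
    fix y assume "y \<in> N'"
    then have "c * y \<in> N" by (simp add: N'_def)
    moreover have "y = (1/c) *\<^sub>R (c * y) + 0" using c by simp
    ultimately show "y \<in> (\<lambda>x. (1/c) *\<^sub>R x + 0) ` N" by blast
  next
    fix y assume "y \<in> (\<lambda>x. (1/c) *\<^sub>R x + 0) ` N"
    then obtain z where "z \<in> N" "y = (1/c) *\<^sub>R z + 0" by auto
    then show "y \<in> N'" using c by (simp add: N'_def)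
  qed
  then have "emeasure lebesgue N' = 0"
    using emeasure_lebesgue_affine[of "1/c" 0 N] N(2) by simp
  moreover have "{x \<in> space lebesgue. \<not> P (c * x)} \<subseteq> N'"
    using N(1) by (auto simp: N'_def)
  ultimately show ?thesis by (intro AE_I) auto
qed

lemma AE_scale_iff:
  fixes c :: real
  assumes c: "c \<noteq> 0"
  shows "(AE x in lebesgue. P (c * x)) \<longleftrightarrow> (AE x in lebesgue. P x)"
proof
  assume "AE x in lebesgue. P (c * x)"
  from AE_scale[OF _ this, of "1/c"] c show "AE x in lebesgue. P x" by simp
qed (use AE_scale[OF c] in auto)

lemma meas_scale:
  fixes f :: "real \<Rightarrow> real"
  assumes "f \<in> borel_measurable lebesgue"
  shows "(\<lambda>x. f (c * x)) \<in> borel_measurable lebesgue"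
proof -
  have meas: "(\<lambda>y. c * y) \<in> lebesgue \<rightarrow>\<^sub>M lebesgue"
    proof -
    have "((*\<^sub>R) c :: real \<Rightarrow> real) = (\<lambda>y. c * y)" by (rule ext) simp
    then show ?thesis using lebesgue_measurable_scaling[of c, where 'a=real] by simp
  qed
  show ?thesis using measurable_compose[OF meas assms] by (simp add: o_def)
qed

lemma nn_scale:
  fixes c :: real
  assumes f: "f \<in> borel_measurable lebesgue" and c: "c \<noteq> 0"
  shows "(\<integral>\<^sup>+x. f (c * x) \<partial>lebesgue) = ennreal (1/\<bar>c\<bar>) * (\<integral>\<^sup>+x. f x \<partial>lebesgue)"
proof -
  have "(\<integral>\<^sup>+x. f x \<partial>lebesgue) = ennreal\<bar>c\<bar> * (\<integral>\<^sup>+x. f(0 + c * x) \<partial>lebesgue)"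
    by (rule nn_integral_real_affine_lebesgue[OF f c])
  then have "ennreal (1/\<bar>c\<bar>) * (\<integral>\<^sup>+x. f x \<partial>lebesgue) = (ennreal (1/\<bar>c\<bar>) * ennreal\<bar>c\<bar>) * (\<integral>\<^sup>+x. f(c * x) \<partial>lebesgue)"
    by (simp add: mult.assoc)
  also have "ennreal (1/\<bar>c\<bar>) * ennreal\<bar>c\<bar> = 1"
    using c by (simp add: ennreal_mult[symmetric])
  finally show ?thesis by simp
qed

lemma convex_powr_ineq:
  fixes u v l q :: real
  assumes "u \<ge> 0" "v \<ge> 0" "0 \<le> l" "l \<le> 1" "q \<ge> 1"
  shows "(l * u + (1 - l) * v) powr q \<le> l * u powr q + (1 - l) * v powr q"
proof (cases "u > 0 \<and> v > 0")
  case True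
  have "convex_on {0<..} (\<lambda>x. x powr q)" by (rule powr_convex) fact
  from convex_onD[OF this, of "1 - l" u v] True assms
  show ?thesis by (simp add: add.commute)
next
  case False
  have aux: "(t * w) powr q \<le> t * w powr q" if "0 \<le> t" "t \<le> 1" "w \<ge> 0" for t w
  proof -
    have e: "(t * w) powr q = t powr q * w powr q" using that by (simp add: powr_mult)
    have "t powr q \<le> t"
    proof (cases "t = 0")
      case False
      then show ?thesis using that assms(5) by (intro powr_le_one_le) auto
    qed simp
    then have "t powr q * w powr q \<le> t * w powr q" by (rule mult_right_mono) simp
    then show ?thesis by (simp only: e)
  qed
  have nn: "0 \<le> l * u powr q" "0 \<le> (1 - l) * v powr q" using assms by simp_all
  show ?thesis
  proof (cases "u = 0")
    case True
    then have "(l * u + (1 - l) * v) powr q = ((1 - l) * v) powr q" by simp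
    moreover have "((1 - l) * v) powr q \<le> (1 - l) * v powr q" by (rule aux) (use assms in auto)
    ultimately show ?thesis using nn by linarith
  next
    case False
    then have "v = 0" using \<open>\<not>(u > 0 \<and> v > 0)\<close> assms by auto
    then have "(l * u + (1 - l) * v) powr q = (l * u) powr q" by simp
    moreover have "(l * u) powr q \<le> l * u powr q" by (rule aux) (use assms in auto)
    ultimately show ?thesis using nn by linarith
  qed
qed



definition II :: "real \<Rightarrow> (real \<Rightarrow> real) \<Rightarrow> ennreal" where
  "II q f = (\<integral>\<^sup>+x. ennreal (\<bar>f x\<bar> powr q) \<partial>lebesgue)"

definition NN :: "real \<Rightarrow> (real \<Rightarrow> real) \<Rightarrow> real" where
  "NN q f = enn2real (II q f) powr (1/q)"

lemma NN_nonneg: "NN q f \<ge> 0" by (simp add: NN_def)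

lemma II_eq:
  assumes "II q f < \<infinity>" "q \<ge> 1"
  shows "II q f = ennreal (NN q f powr q)"
proof -
  have "II q f = ennreal (enn2real (II q f))" using assms by (simp add: less_top)
  moreover have "(enn2real (II q f) powr (1/q)) powr q = enn2real (II q f)"
    using assms(2) by (simp add: powr_powr)
  ultimately show ?thesis by (simp add: NN_def)
qed

lemma NN_le:
  assumes "II q f \<le> ennreal (A powr q)" "A \<ge> 0" "q \<ge> 1"
  shows "NN q f \<le> A"
proof -
  have "enn2real (II q f) \<le> enn2real (ennreal (A powr q))"
    by (rule enn2real_mono[OF assms(1)]) simp
  then have "enn2real (II q f) \<le> A powr q" by simp
  then have "enn2real (II q f) powr (1/q) \<le> (A powr q) powr (1/q)"
    using assms by (intro powr_mono2) auto
  also have "\<dots> = A" using assms by (simp add: powr_powr)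
  finally show ?thesis by (simp add: NN_def)
qed

lemma mink_pt:
  fixes A B q x y :: real
  assumes A: "A > 0" and B: "B > 0" and q: "q \<ge> 1"
  shows "\<bar>x + y\<bar> powr q \<le> ((A+B) powr q * (A/(A+B)) / A powr q) * \<bar>x\<bar> powr q
            + ((A+B) powr q * (B/(A+B)) / B powr q) * \<bar>y\<bar> powr q"
proof -
  define l where "l = A/(A+B)"
  have l: "0 \<le> l" "l \<le> 1" "1 - l = B/(A+B)" using A B by (auto simp: l_def field_simps)
  have eq: "\<bar>x\<bar> + \<bar>y\<bar> = (A+B) * (l * (\<bar>x\<bar>/A) + (1 - l) * (\<bar>y\<bar>/B))"
  proof -
    have "l * (\<bar>x\<bar>/A) = \<bar>x\<bar>/(A+B)" using A B by (simp add: l_def field_simps)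
    moreover have "(1 - l) * (\<bar>y\<bar>/B) = \<bar>y\<bar>/(A+B)" using A B unfolding l(3) by (simp add: field_simps)
    ultimately show ?thesis using A B by (simp add: add_divide_distrib[symmetric])
  qed
  have "\<bar>x + y\<bar> powr q \<le> (\<bar>x\<bar> + \<bar>y\<bar>) powr q"
    using q by (intro powr_mono2) auto
  also have "\<dots> = (A+B) powr q * (l * (\<bar>x\<bar>/A) + (1 - l) * (\<bar>y\<bar>/B)) powr q"
    unfolding eq using A B l by (simp add: powr_mult)
  also have "\<dots> \<le> (A+B) powr q * (l * (\<bar>x\<bar>/A) powr q + (1 - l) * (\<bar>y\<bar>/B) powr q)"
    using A B l q by (intro mult_left_mono convex_powr_ineq) auto
  also have "\<dots> = ((A+B) powr q * (A/(A+B)) / A powr q) * \<bar>x\<bar> powr q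
            + ((A+B) powr q * (B/(A+B)) / B powr q) * \<bar>y\<bar> powr q"
    using A B by (simp add: l l_def powr_divide field_simps)
  finally show ?thesis .
qed

lemma minkowski_eps:
  fixes f g :: "real \<Rightarrow> real"
  assumes f: "f \<in> borel_measurable lebesgue" and g: "g \<in> borel_measurable lebesgue"
    and q: "q \<ge> 1" and A: "A > 0" and B: "B > 0"
    and fA: "II q f \<le> ennreal (A powr q)" and gB: "II q g \<le> ennreal (B powr q)"
  shows "II q (\<lambda>x. f x + g x) \<le> ennreal ((A+B) powr q)"
proof -
  define c1 where "c1 = (A+B) powr q * (A/(A+B)) / A powr q"
  define c2 where "c2 = (A+B) powr q * (B/(A+B)) / B powr q"
  have c: "c1 \<ge> 0" "c2 \<ge> 0" using A B by (auto simp: c1_def c2_def)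
  have "II q (\<lambda>x. f x + g x) \<le> (\<integral>\<^sup>+x. ennreal (c1 * \<bar>f x\<bar> powr q) + ennreal (c2 * \<bar>g x\<bar> powr q) \<partial>lebesgue)"
    unfolding II_def
  proof (intro nn_integral_mono)
    fix x
    have "\<bar>f x + g x\<bar> powr q \<le> c1 * \<bar>f x\<bar> powr q + c2 * \<bar>g x\<bar> powr q"
      using mink_pt[OF A B q] unfolding c1_def c2_def by blast
    then have "ennreal (\<bar>f x + g x\<bar> powr q) \<le> ennreal (c1 * \<bar>f x\<bar> powr q + c2 * \<bar>g x\<bar> powr q)"
      by (rule ennreal_leI)
    also have "\<dots> = ennreal (c1 * \<bar>f x\<bar> powr q) + ennreal (c2 * \<bar>g x\<bar> powr q)"
      using c by (intro ennreal_plus) auto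
    finally show "ennreal (\<bar>f x + g x\<bar> powr q) \<le> ennreal (c1 * \<bar>f x\<bar> powr q) + ennreal (c2 * \<bar>g x\<bar> powr q)" .
  qed
  also have "\<dots> = (\<integral>\<^sup>+x. ennreal c1 * ennreal (\<bar>f x\<bar> powr q) \<partial>lebesgue) + (\<integral>\<^sup>+x. ennreal c2 * ennreal (\<bar>g x\<bar> powr q) \<partial>lebesgue)"
    using f g c by (subst nn_integral_add[symmetric]) (auto simp: ennreal_mult)
  also have "\<dots> = ennreal c1 * II q f + ennreal c2 * II q g"
    using f g by (simp add: nn_integral_cmult II_def)
  also have "\<dots> \<le> ennreal c1 * ennreal (A powr q) + ennreal c2 * ennreal (B powr q)"
    by (intro add_mono mult_left_mono fA gB) auto
  also have "\<dots> = ennreal (c1 * A powr q + c2 * B powr q)"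
    using c by (simp add: ennreal_mult ennreal_plus)
  also have "c1 * A powr q + c2 * B powr q = (A+B) powr q"
  proof -
    have "c1 * A powr q = (A+B) powr q * (A/(A+B))" using A by (simp add: c1_def)
    moreover have "c2 * B powr q = (A+B) powr q * (B/(A+B))" using B by (simp add: c2_def)
    moreover have "A/(A+B) + B/(A+B) = 1" using A B by (simp add: add_divide_distrib[symmetric])
    ultimately show ?thesis by (metis distrib_left mult.right_neutral)
  qed
  finally show ?thesis .
qed

lemma minkowski:
  fixes f g :: "real \<Rightarrow> real"
  assumes f: "f \<in> borel_measurable lebesgue" and g: "g \<in> borel_measurable lebesgue"
    and q: "q \<ge> 1" and fi: "II q f < \<infinity>" and gi: "II q g < \<infinity>"
  shows "II q (\<lambda>x. f x + g x) < \<infinity>" "NN q (\<lambda>x. f x + g x) \<le> NN q f + NN q g"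
proof -
  have main: "II q (\<lambda>x. f x + g x) \<le> ennreal ((NN q f + NN q g + 2*e) powr q)" if e: "e > 0" for e
  proof -
    have "II q (\<lambda>x. f x + g x) \<le> ennreal (((NN q f + e) + (NN q g + e)) powr q)"
    proof (rule minkowski_eps[OF f g q])
      show "II q f \<le> ennreal ((NN q f + e) powr q)"
        using II_eq[OF fi q] e q NN_nonneg[of q f] by (auto intro!: powr_mono2)
      show "II q g \<le> ennreal ((NN q g + e) powr q)"
        using II_eq[OF gi q] e q NN_nonneg[of q g] by (auto intro!: powr_mono2)
    qed (use e NN_nonneg[of q f] NN_nonneg[of q g] in auto)
    then show ?thesis by (simp add: algebra_simps)
  qed
  from main[of 1] show "II q (\<lambda>x. f x + g x) < \<infinity>"
    using le_less_trans by fastforce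
  show "NN q (\<lambda>x. f x + g x) \<le> NN q f + NN q g"
  proof (rule field_le_epsilon)
    fix e :: real assume e: "e > 0"
    show "NN q (\<lambda>x. f x + g x) \<le> NN q f + NN q g + e"
      using NN_le[OF main[of "e/2"]] e q NN_nonneg[of q f] NN_nonneg[of q g] by simp
  qed
qed



lemma II_cmult:
  assumes "f \<in> borel_measurable lebesgue"
  shows "II q (\<lambda>x. c * f x) = ennreal (\<bar>c\<bar> powr q) * II q f"
proof -
  have "II q (\<lambda>x. c * f x) = (\<integral>\<^sup>+x. ennreal (\<bar>c\<bar> powr q) * ennreal (\<bar>f x\<bar> powr q) \<partial>lebesgue)"
    unfolding II_def by (intro nn_integral_cong) (simp add: abs_mult powr_mult ennreal_mult)
  also have "\<dots> = ennreal (\<bar>c\<bar> powr q) * II q f"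
    using assms by (simp add: nn_integral_cmult II_def)
  finally show ?thesis .
qed

lemma NN_cmult:
  assumes "f \<in> borel_measurable lebesgue" "q \<ge> 1"
  shows "NN q (\<lambda>x. c * f x) = \<bar>c\<bar> * NN q f"
proof -
  have "enn2real (II q (\<lambda>x. c * f x)) = \<bar>c\<bar> powr q * enn2real (II q f)"
    using II_cmult[OF assms(1)] by (simp add: enn2real_mult)
  then show ?thesis using assms(2)
    by (simp add: NN_def powr_mult powr_powr)
qed

lemma II_scale:
  assumes "f \<in> borel_measurable lebesgue" "c \<noteq> 0"
  shows "II q (\<lambda>x. f (c * x)) = ennreal (1/\<bar>c\<bar>) * II q f"
  unfolding II_def using assms by (intro nn_scale) auto

lemma NN_scale:
  assumes "f \<in> borel_measurable lebesgue" "c \<noteq> 0" "q \<ge> 1"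
  shows "NN q (\<lambda>x. f (c * x)) = (1/\<bar>c\<bar>) powr (1/q) * NN q f"
proof -
  have "enn2real (II q (\<lambda>x. f (c * x))) = (1/\<bar>c\<bar>) * enn2real (II q f)"
    using II_scale[OF assms(1,2)] by (simp add: enn2real_mult)
  then show ?thesis using assms(2,3)
    by (simp add: NN_def powr_divide)
qed

lemma II_AE:
  assumes "AE x in lebesgue. f x = g x"
  shows "II q f = II q g"
  unfolding II_def using assms by (intro nn_integral_cong_AE) auto

lemma NN_AE:
  assumes "AE x in lebesgue. f x = g x"
  shows "NN q f = NN q g"
  using II_AE[OF assms] by (simp add: NN_def)

lemma NN_zero:
  assumes f: "f \<in> borel_measurable lebesgue" and fi: "II q f < \<infinity>" and q: "q \<ge> 1" and z: "NN q f = 0"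
  shows "AE x in lebesgue. f x = 0"
proof -
  have "enn2real (II q f) = 0" using z q by (simp add: NN_def)
  then have "II q f = 0" using fi by (auto simp: enn2real_eq_0_iff)
  then have "AE x in lebesgue. ennreal (\<bar>f x\<bar> powr q) = 0"
    unfolding II_def using f by (subst nn_integral_0_iff_AE[symmetric]) auto
  then show ?thesis by eventually_elim simp
qed

lemma NN_mono:
  assumes g: "II q g < \<infinity>" and q: "q \<ge> 1" and le: "AE x in lebesgue. \<bar>f x\<bar> \<le> \<bar>g x\<bar>"
  shows "II q f < \<infinity>" "NN q f \<le> NN q g"
proof -
  have "II q f \<le> II q g"
    unfolding II_def using le q
    by (intro nn_integral_mono_AE) (auto elim!: eventually_mono intro!: ennreal_leI powr_mono2)
  then show "II q f < \<infinity>" using g by auto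
  have "II q f \<le> ennreal (NN q g powr q)" using \<open>II q f \<le> II q g\<close> II_eq[OF g q] by simp
  then show "NN q f \<le> NN q g" using NN_le NN_nonneg q by blast
qed

lemma II_abs: "II q (\<lambda>x. \<bar>f x\<bar>) = II q f" by (simp add: II_def)
lemma NN_abs: "NN q (\<lambda>x. \<bar>f x\<bar>) = NN q f" by (simp add: NN_def II_abs)

lemma minkowski_sum:
  fixes g :: "nat \<Rightarrow> real \<Rightarrow> real"
  assumes g: "\<And>n. g n \<in> borel_measurable lebesgue" and gi: "\<And>n. II q (g n) < \<infinity>" and q: "q \<ge> 1"
  shows "II q (\<lambda>x. \<Sum>n<M. \<bar>g n x\<bar>) < \<infinity> \<and> NN q (\<lambda>x. \<Sum>n<M. \<bar>g n x\<bar>) \<le> (\<Sum>n<M. NN q (g n))"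
proof (induction M)
  case 0
  have "II q (\<lambda>x. 0) = 0" using q by (simp add: II_def)
  then show ?case by (simp add: NN_def)
next
  case (Suc M)
  have m1: "(\<lambda>x. \<Sum>n<M. \<bar>g n x\<bar>) \<in> borel_measurable lebesgue" using g by measurable
  have m2: "(\<lambda>x. \<bar>g M x\<bar>) \<in> borel_measurable lebesgue" using g by measurable
  have i2: "II q (\<lambda>x. \<bar>g M x\<bar>) < \<infinity>" using gi by (simp add: II_abs)
  note mk = minkowski[OF m1 m2 q conjunct1[OF Suc.IH] i2]
  show ?case using mk Suc.IH by (simp add: NN_abs)
qed



lemma tail_pt:
  fixes a :: "nat \<Rightarrow> real"
  assumes sa: "summable (\<lambda>n. \<bar>a n\<bar>)" and q: "q \<ge> 1"
  shows "ennreal (\<bar>lim (\<lambda>N. \<Sum>n<N. a n) - (\<Sum>n<N0. a n)\<bar> powr q)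
          \<le> (\<Squnion>M. ennreal ((\<Sum>n<M. \<bar>a (n + N0)\<bar>) powr q))"
proof -
  have s: "summable a" using sa by (rule summable_rabs_cancel)
  have "lim (\<lambda>N. \<Sum>n<N. a n) = suminf a" using summable_LIMSEQ[OF s] by (rule limI)
  then have eq: "lim (\<lambda>N. \<Sum>n<N. a n) - (\<Sum>n<N0. a n) = (\<Sum>n. a (n + N0))"
    using suminf_minus_initial_segment[OF s, of N0] by simp
  have sa': "summable (\<lambda>n. \<bar>a (n + N0)\<bar>)" using sa summable_iff_shift[of "\<lambda>n. \<bar>a n\<bar>" N0] by simp
  define v where "v = (\<Sum>n. \<bar>a (n + N0)\<bar>)"
  have v: "\<bar>\<Sum>n. a (n + N0)\<bar> \<le> v" unfolding v_def by (rule summable_rabs[OF sa'])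
  have lim: "(\<lambda>M. ennreal ((\<Sum>n<M. \<bar>a (n + N0)\<bar>) powr q)) \<longlonglongrightarrow> ennreal (v powr q)"
    unfolding v_def using q
    by (intro tendsto_ennrealI tendsto_powr' summable_LIMSEQ[OF sa'] tendsto_const) (auto intro: sum_nonneg)
  have "ennreal (v powr q) \<le> (\<Squnion>M. ennreal ((\<Sum>n<M. \<bar>a (n + N0)\<bar>) powr q))"
    by (rule LIMSEQ_le_const2[OF lim]) (metis SUP_upper UNIV_I)
  moreover have "ennreal (\<bar>\<Sum>n. a (n + N0)\<bar> powr q) \<le> ennreal (v powr q)"
    using v q by (intro ennreal_leI powr_mono2) auto
  ultimately show ?thesis unfolding eq by (rule order_trans[rotated])
qed

lemma series_fin:
  fixes h :: "nat \<Rightarrow> real \<Rightarrow> real"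
  assumes hm: "\<And>n. h n \<in> borel_measurable lebesgue" and hi: "\<And>n. II q (h n) < \<infinity>"
    and q: "q \<ge> 1" and sm: "summable (\<lambda>n. NN q (h n))"
  shows "\<exists>S. S \<in> borel_measurable lebesgue \<and> (\<forall>N. II q (\<lambda>x. S x - (\<Sum>n<N. h n x)) < \<infinity>
            \<and> NN q (\<lambda>x. S x - (\<Sum>n<N. h n x)) \<le> (\<Sum>n. NN q (h (n + N))))"
proof -
  have L: "(\<integral>\<^sup>+x. (\<Squnion>M. ennreal ((\<Sum>n<M. \<bar>h (n+k) x\<bar>) powr q)) \<partial>lebesgue)
            \<le> ennreal ((\<Sum>n. NN q (h (n+k))) powr q)" for k
  proof -
    have inc: "incseq (\<lambda>M x. ennreal ((\<Sum>n<M. \<bar>h (n+k) x\<bar>) powr q))"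
      unfolding incseq_def le_fun_def using q
      by (auto intro!: ennreal_leI powr_mono2 sum_nonneg sum_mono2)
    have meas: "\<And>M. (\<lambda>x. ennreal ((\<Sum>n<M. \<bar>h (n+k) x\<bar>) powr q)) \<in> borel_measurable lebesgue"
      using hm by measurable
    have smk: "summable (\<lambda>n. NN q (h (n+k)))" using sm summable_iff_shift[of "\<lambda>n. NN q (h n)" k] by simp
    show ?thesis
    proof (subst nn_integral_monotone_convergence_SUP[OF inc meas], rule SUP_least)
      fix M
      let ?G = "\<lambda>x. \<Sum>n<M. \<bar>h (n+k) x\<bar>"
      have mk: "II q ?G < \<infinity> \<and> NN q ?G \<le> (\<Sum>n<M. NN q (h (n+k)))"
        by (rule minkowski_sum[OF hm hi q])
      have "(\<integral>\<^sup>+x. ennreal (?G x powr q) \<partial>lebesgue) = II q ?G"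
        unfolding II_def by (intro nn_integral_cong) (simp add: sum_nonneg)
      also have "\<dots> = ennreal (NN q ?G powr q)" using II_eq mk q by blast
      also have "\<dots> \<le> ennreal ((\<Sum>n. NN q (h (n+k))) powr q)"
      proof (intro ennreal_leI powr_mono2)
        show "NN q ?G \<le> (\<Sum>n. NN q (h (n+k)))"
          using mk sum_le_suminf[OF smk, of "{..<M}"] NN_nonneg by (auto intro: order_trans)
      qed (use q NN_nonneg in auto)
      finally show "(\<integral>\<^sup>+x. ennreal (?G x powr q) \<partial>lebesgue) \<le> ennreal ((\<Sum>n. NN q (h (n+k))) powr q)" .
    qed
  qed
  have measU: "(\<lambda>x. \<Squnion>M. ennreal ((\<Sum>n<M. \<bar>h (n+k) x\<bar>) powr q)) \<in> borel_measurable lebesgue" for k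
    using hm by measurable
  have "AE x in lebesgue. (\<Squnion>M. ennreal ((\<Sum>n<M. \<bar>h (n+0) x\<bar>) powr q)) \<noteq> \<infinity>"
    using L[of 0] by (intro nn_integral_PInf_AE[OF measU]) (auto simp: top_unique)
  then have good: "AE x in lebesgue. summable (\<lambda>n. \<bar>h n x\<bar>)"
  proof eventually_elim
    case (elim x)
    let ?U = "\<Squnion>M. ennreal ((\<Sum>n<M. \<bar>h (n+0) x\<bar>) powr q)"
    show ?case
    proof (rule summableI_nonneg_bounded)
      fix M
      have "ennreal ((\<Sum>n<M. \<bar>h n x\<bar>) powr q) \<le> ?U" by (rule SUP_upper2[of M]) auto
      then have "enn2real (ennreal ((\<Sum>n<M. \<bar>h n x\<bar>) powr q)) \<le> enn2real ?U"
        by (rule enn2real_mono) (use elim in \<open>simp only: less_top[symmetric] infinity_ennreal_def not_False_eq_True\<close>)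
      then have "(\<Sum>n<M. \<bar>h n x\<bar>) powr q \<le> enn2real ?U" by simp
      then have "((\<Sum>n<M. \<bar>h n x\<bar>) powr q) powr (1/q) \<le> (enn2real ?U) powr (1/q)"
        using q by (intro powr_mono2) auto
      then show "(\<Sum>n<M. \<bar>h n x\<bar>) \<le> (enn2real ?U) powr (1/q)"
        using q by (simp add: powr_powr sum_nonneg)
    qed auto
  qed
  define S where "S x = lim (\<lambda>N. \<Sum>n<N. h n x)" for x
  have Sm: "S \<in> borel_measurable lebesgue" unfolding S_def using hm by measurable
  have "II q (\<lambda>x. S x - (\<Sum>n<N. h n x)) < \<infinity> \<and> NN q (\<lambda>x. S x - (\<Sum>n<N. h n x)) \<le> (\<Sum>n. NN q (h (n + N)))" for N
  proof -
    have "II q (\<lambda>x. S x - (\<Sum>n<N. h n x)) \<le> (\<integral>\<^sup>+x. (\<Squnion>M. ennreal ((\<Sum>n<M. \<bar>h (n+N) x\<bar>) powr q)) \<partial>lebesgue)"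
      unfolding II_def S_def using good
      by (intro nn_integral_mono_AE) (auto elim!: eventually_mono intro: tail_pt[OF _ q])
    also have "\<dots> \<le> ennreal ((\<Sum>n. NN q (h (n+N))) powr q)" by (rule L)
    finally have *: "II q (\<lambda>x. S x - (\<Sum>n<N. h n x)) \<le> ennreal ((\<Sum>n. NN q (h (n+N))) powr q)" .
    have nn: "0 \<le> (\<Sum>n. NN q (h (n+N)))"
      using sm summable_iff_shift[of "\<lambda>n. NN q (h n)" N] NN_nonneg by (auto intro: suminf_nonneg)
    show ?thesis using * NN_le[OF * nn q] by (auto simp: le_less_trans)
  qed
  then show ?thesis using Sm by blast
qed



definition EE :: "(real \<Rightarrow> real) \<Rightarrow> ereal" where
  "EE f = esssup lebesgue (\<lambda>x. ereal \<bar>f x\<bar>)"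

lemma lebesgue_not_AE_False: "\<not> (AE x::real in lebesgue. False)"
proof
  assume "AE x::real in lebesgue. False"
  then obtain N where N: "{x \<in> space lebesgue. \<not> False} \<subseteq> N" "emeasure lebesgue N = 0" "N \<in> sets (lebesgue :: real measure)"
    by (rule AE_E)
  then have "UNIV \<subseteq> N" by simp
  then have "emeasure lebesgue {0..(1::real)} \<le> emeasure lebesgue N"
    using N(3) by (intro emeasure_mono) auto
  with N(2) show False by simp
qed

lemma EE_nonneg: "EE f \<ge> 0"
proof (rule ccontr)
  assume "\<not> EE f \<ge> 0"
  then have "EE f < 0" by simp
  have "AE x in lebesgue. ereal \<bar>f x\<bar> \<le> EE f" unfolding EE_def by (rule esssup_AE)
  then have "AE x::real in lebesgue. False"
  proof (rule eventually_mono)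
    fix x assume "ereal \<bar>f x\<bar> \<le> EE f"
    then show False using \<open>EE f < 0\<close> by (metis abs_ge_zero ereal_less_eq(5) leD order.strict_trans2)
  qed
  with lebesgue_not_AE_False show False by simp
qed

lemma EE_fin: "EE f < \<infinity> \<Longrightarrow> EE f = ereal (real_of_ereal (EE f))"
  using EE_nonneg[of f] by (cases "EE f") auto

lemma EE_bound: "EE f < \<infinity> \<Longrightarrow> AE x in lebesgue. \<bar>f x\<bar> \<le> real_of_ereal (EE f)"
proof -
  assume "EE f < \<infinity>"
  have "AE x in lebesgue. ereal \<bar>f x\<bar> \<le> EE f" unfolding EE_def by (rule esssup_AE)
  then show ?thesis
  proof (rule eventually_mono)
    fix x assume "ereal \<bar>f x\<bar> \<le> EE f"
    then show "\<bar>f x\<bar> \<le> real_of_ereal (EE f)" using EE_fin[OF \<open>EE f < \<infinity>\<close>] by (metis ereal_less_eq(3))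
  qed
qed

lemma EE_le:
  assumes "f \<in> borel_measurable lebesgue" "AE x in lebesgue. \<bar>f x\<bar> \<le> c"
  shows "EE f \<le> ereal c"
  unfolding EE_def using assms by (intro esssup_I) (auto elim!: eventually_mono)

lemma EE_le':
  assumes "f \<in> borel_measurable lebesgue" "AE x in lebesgue. \<bar>f x\<bar> \<le> c"
  shows "EE f < \<infinity>" "real_of_ereal (EE f) \<le> c"
proof -
  have "EE f \<le> ereal c" by (rule EE_le[OF assms])
  then show "EE f < \<infinity>" by (rule le_less_trans) simp
  then show "real_of_ereal (EE f) \<le> c" using \<open>EE f \<le> ereal c\<close> EE_fin by (metis ereal_less_eq(3))
qed

lemma EE_add:
  assumes "f \<in> borel_measurable lebesgue" "g \<in> borel_measurable lebesgue" "EE f < \<infinity>" "EE g < \<infinity>"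
  shows "EE (\<lambda>x. f x + g x) < \<infinity>"
    "real_of_ereal (EE (\<lambda>x. f x + g x)) \<le> real_of_ereal (EE f) + real_of_ereal (EE g)"
proof -
  have "AE x in lebesgue. \<bar>f x + g x\<bar> \<le> real_of_ereal (EE f) + real_of_ereal (EE g)"
    using EE_bound[OF assms(3)] EE_bound[OF assms(4)] by eventually_elim auto
  moreover have "(\<lambda>x. f x + g x) \<in> borel_measurable lebesgue" using assms by measurable
  ultimately show "EE (\<lambda>x. f x + g x) < \<infinity>"
    "real_of_ereal (EE (\<lambda>x. f x + g x)) \<le> real_of_ereal (EE f) + real_of_ereal (EE g)"
    using EE_le' by blast+
qed

lemma EE_cmult_le:
  assumes "f \<in> borel_measurable lebesgue" "EE f < \<infinity>"
  shows "EE (\<lambda>x. c * f x) < \<infinity>" "real_of_ereal (EE (\<lambda>x. c * f x)) \<le> \<bar>c\<bar> * real_of_ereal (EE f)"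
proof -
  have "AE x in lebesgue. \<bar>c * f x\<bar> \<le> \<bar>c\<bar> * real_of_ereal (EE f)"
    using EE_bound[OF assms(2)] by eventually_elim (auto simp: abs_mult mult_left_mono)
  moreover have "(\<lambda>x. c * f x) \<in> borel_measurable lebesgue" using assms by measurable
  ultimately show "EE (\<lambda>x. c * f x) < \<infinity>" "real_of_ereal (EE (\<lambda>x. c * f x)) \<le> \<bar>c\<bar> * real_of_ereal (EE f)"
    using EE_le' by blast+
qed

lemma EE_cmult:
  assumes "f \<in> borel_measurable lebesgue" "EE f < \<infinity>"
  shows "real_of_ereal (EE (\<lambda>x. c * f x)) = \<bar>c\<bar> * real_of_ereal (EE f)"
proof (cases "c = 0")
  case True
  have "EE (\<lambda>x. 0 * f x) \<le> ereal 0" by (rule EE_le) auto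
  then have "EE (\<lambda>x. 0 * f x) = 0" using EE_nonneg[of "\<lambda>x. 0 * f x"] zero_ereal_def by (metis order_antisym)
  then show ?thesis using True by simp
next
  case False
  have m: "(\<lambda>x. c * f x) \<in> borel_measurable lebesgue" using assms by measurable
  note a = EE_cmult_le[OF assms, of c]
  have "real_of_ereal (EE (\<lambda>x. (1/c) * (c * f x))) \<le> \<bar>1/c\<bar> * real_of_ereal (EE (\<lambda>x. c * f x))"
    by (rule EE_cmult_le(2)[OF m a(1)])
  then have "real_of_ereal (EE f) \<le> \<bar>1/c\<bar> * real_of_ereal (EE (\<lambda>x. c * f x))" using False by simp
  then have "\<bar>c\<bar> * real_of_ereal (EE f) \<le> real_of_ereal (EE (\<lambda>x. c * f x))"
    using False by (simp add: field_simps)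
  then show ?thesis using a by simp
qed

lemma EE_scale:
  assumes "f \<in> borel_measurable lebesgue" "EE f < \<infinity>" "c \<noteq> 0"
  shows "EE (\<lambda>x. f (c * x)) < \<infinity>" "real_of_ereal (EE (\<lambda>x. f (c * x))) = real_of_ereal (EE f)"
proof -
  have m: "(\<lambda>x. f (c * x)) \<in> borel_measurable lebesgue" using assms(1) by (rule meas_scale)
  have "AE x in lebesgue. \<bar>f (c * x)\<bar> \<le> real_of_ereal (EE f)"
    using AE_scale[OF assms(3) EE_bound[OF assms(2)]] .
  note * = EE_le'[OF m this]
  show "EE (\<lambda>x. f (c * x)) < \<infinity>" by (rule *(1))
  have "AE x in lebesgue. \<bar>f (c * ((1/c) * x))\<bar> \<le> real_of_ereal (EE (\<lambda>x. f (c * x)))"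
    using AE_scale[OF _ EE_bound[OF *(1)], of "1/c"] assms(3) by simp
  then have "AE x in lebesgue. \<bar>f x\<bar> \<le> real_of_ereal (EE (\<lambda>x. f (c * x)))"
    using assms(3) by simp
  from EE_le'(2)[OF assms(1) this] *(2)
  show "real_of_ereal (EE (\<lambda>x. f (c * x))) = real_of_ereal (EE f)" by simp
qed

lemma EE_AE:
  assumes "g \<in> borel_measurable lebesgue" "f \<in> borel_measurable lebesgue" "AE x in lebesgue. f x = g x"
  shows "EE f = EE g"
  unfolding EE_def using assms by (intro esssup_AE_cong) (auto elim!: eventually_mono)

lemma EE_zero:
  assumes "EE f < \<infinity>" "real_of_ereal (EE f) = 0"
  shows "AE x in lebesgue. f x = 0"
  using EE_bound[OF assms(1)] by (rule eventually_mono) (use assms(2) in simp)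

lemma series_inf:
  fixes h :: "nat \<Rightarrow> real \<Rightarrow> real"
  assumes hm: "\<And>n. h n \<in> borel_measurable lebesgue" and hi: "\<And>n. EE (h n) < \<infinity>"
    and sm: "summable (\<lambda>n. real_of_ereal (EE (h n)))"
  shows "\<exists>S. S \<in> borel_measurable lebesgue \<and> (\<forall>N. EE (\<lambda>x. S x - (\<Sum>n<N. h n x)) < \<infinity>
            \<and> real_of_ereal (EE (\<lambda>x. S x - (\<Sum>n<N. h n x))) \<le> (\<Sum>n. real_of_ereal (EE (h (n + N)))))"
proof -
  have good: "AE x in lebesgue. \<forall>n. \<bar>h n x\<bar> \<le> real_of_ereal (EE (h n))"
    using EE_bound[OF hi] by (simp add: AE_all_countable)
  define S where "S x = lim (\<lambda>N. \<Sum>n<N. h n x)" for x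
  have Sm: "S \<in> borel_measurable lebesgue" unfolding S_def using hm by measurable
  have "EE (\<lambda>x. S x - (\<Sum>n<N. h n x)) < \<infinity>
            \<and> real_of_ereal (EE (\<lambda>x. S x - (\<Sum>n<N. h n x))) \<le> (\<Sum>n. real_of_ereal (EE (h (n + N))))" for N
  proof -
    have smN: "summable (\<lambda>n. real_of_ereal (EE (h (n + N))))"
      using sm summable_iff_shift[of "\<lambda>n. real_of_ereal (EE (h n))" N] by simp
    have "AE x in lebesgue. \<bar>S x - (\<Sum>n<N. h n x)\<bar> \<le> (\<Sum>n. real_of_ereal (EE (h (n + N))))"
      using good
    proof eventually_elim
      case (elim x)
      have sa: "summable (\<lambda>n. \<bar>h n x\<bar>)"
        by (rule summable_comparison_test[OF _ sm]) (use elim in auto)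
      have s: "summable (\<lambda>n. h n x)" using sa by (rule summable_rabs_cancel)
      have "S x = (\<Sum>n. h n x)" unfolding S_def using summable_LIMSEQ[OF s] by (rule limI)
      then have eq: "S x - (\<Sum>n<N. h n x) = (\<Sum>n. h (n + N) x)"
        using suminf_minus_initial_segment[OF s, of N] by simp
      have sa': "summable (\<lambda>n. \<bar>h (n + N) x\<bar>)" using sa summable_iff_shift[of "\<lambda>n. \<bar>h n x\<bar>" N] by simp
      have "\<bar>\<Sum>n. h (n + N) x\<bar> \<le> (\<Sum>n. \<bar>h (n + N) x\<bar>)" by (rule summable_rabs[OF sa'])
      also have "\<dots> \<le> (\<Sum>n. real_of_ereal (EE (h (n + N))))"
        by (rule suminf_le[OF _ sa' smN]) (use elim in auto)
      finally show ?case unfolding eq .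
    qed
    moreover have "(\<lambda>x. S x - (\<Sum>n<N. h n x)) \<in> borel_measurable lebesgue" using Sm hm by measurable
    ultimately show ?thesis using EE_le' by blast
  qed
  then show ?thesis using Sm by blast
qed



lemma memLp_fin: "p \<noteq> \<infinity> \<Longrightarrow> memLp p f \<longleftrightarrow> f \<in> borel_measurable lebesgue \<and> II (enn2real p) f < \<infinity>"
  by (simp add: memLp_def II_def)
lemma Lp_fin: "p \<noteq> \<infinity> \<Longrightarrow> Lp_norm p f = NN (enn2real p) f"
  by (simp add: Lp_norm_def NN_def II_def)
lemma memLp_inf: "memLp \<top> f \<longleftrightarrow> f \<in> borel_measurable lebesgue \<and> EE f < \<infinity>"
  by (simp add: memLp_def EE_def)
lemma Lp_inf: "Lp_norm \<top> f = real_of_ereal (EE f)"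
  by (simp add: Lp_norm_def EE_def)
lemma q_ge1: "1 \<le> p \<Longrightarrow> p \<noteq> \<infinity> \<Longrightarrow> 1 \<le> enn2real p"
  using enn2real_mono[of 1 p] by (simp add: less_top)
lemma bpow_fin: "p \<noteq> \<infinity> \<Longrightarrow> bpow p c = \<bar>c\<bar> powr (1 / enn2real p)"
  by (simp add: bpow_def)
lemma bpow_pos: "c \<noteq> 0 \<Longrightarrow> bpow p c > 0"
  by (simp add: bpow_def)

lemma G_nonneg: "Lp_norm p f \<ge> 0"
  by (cases "p = \<infinity>") (auto simp: Lp_fin Lp_inf NN_nonneg EE_nonneg real_of_ereal_pos)

lemma G_meas: "memLp p f \<Longrightarrow> f \<in> borel_measurable lebesgue"
  by (simp add: memLp_def)

lemma G_add:
  assumes p: "1 \<le> p" and f: "memLp p f" and g: "memLp p g"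
  shows "memLp p (\<lambda>x. f x + g x) \<and> Lp_norm p (\<lambda>x. f x + g x) \<le> Lp_norm p f + Lp_norm p g"
proof (cases "p = \<infinity>")
  case True
  then show ?thesis using f g EE_add[of f g] by (auto simp: memLp_inf Lp_inf)
next
  case False
  note q = q_ge1[OF p False]
  have m: "(\<lambda>x. f x + g x) \<in> borel_measurable lebesgue" using f g by (auto simp: memLp_def)
  show ?thesis using f g minkowski[OF _ _ q, of f g] m False by (auto simp: memLp_fin Lp_fin)
qed

lemma G_cmult:
  assumes p: "1 \<le> p" and f: "memLp p f"
  shows "memLp p (\<lambda>x. c * f x) \<and> Lp_norm p (\<lambda>x. c * f x) = \<bar>c\<bar> * Lp_norm p f"
proof (cases "p = \<infinity>")
  case True
  then show ?thesis using f EE_cmult_le[of f c] EE_cmult[of f c] by (auto simp: memLp_inf Lp_inf)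
next
  case False
  note q = q_ge1[OF p False]
  have m: "f \<in> borel_measurable lebesgue" using f by (simp add: memLp_def)
  have "II (enn2real p) (\<lambda>x. c * f x) < \<infinity>"
    using f False by (simp add: II_cmult[OF m] memLp_fin ennreal_mult_less_top)
  then show ?thesis using f False m NN_cmult[OF m q] by (auto simp: memLp_fin Lp_fin)
qed

lemma G_scale:
  assumes p: "1 \<le> p" and f: "memLp p f" and c: "c \<noteq> 0"
  shows "memLp p (\<lambda>x. f (c * x)) \<and> Lp_norm p (\<lambda>x. f (c * x)) = Lp_norm p f / bpow p c"
proof (cases "p = \<infinity>")
  case True
  then show ?thesis using f EE_scale[of f c] c meas_scale[of f c] by (auto simp: memLp_inf Lp_inf bpow_def)
next
  case False
  note q = q_ge1[OF p False]
  have m: "f \<in> borel_measurable lebesgue" using f by (simp add: memLp_def)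
  have "II (enn2real p) (\<lambda>x. f (c * x)) < \<infinity>"
    using f False c by (simp add: II_scale[OF m c] memLp_fin ennreal_mult_less_top)
  moreover have "(1 / \<bar>c\<bar>) powr (1 / enn2real p) * NN (enn2real p) f = NN (enn2real p) f / \<bar>c\<bar> powr (1 / enn2real p)"
    using c by (simp add: powr_divide)
  ultimately show ?thesis using f False m NN_scale[OF m c q] meas_scale[OF m, of c]
    by (auto simp: memLp_fin Lp_fin bpow_def)
qed

lemma G_AE:
  assumes p: "1 \<le> p" and f: "memLp p f" and g: "g \<in> borel_measurable lebesgue"
    and ae: "AE x in lebesgue. f x = g x"
  shows "memLp p g \<and> Lp_norm p g = Lp_norm p f"
proof (cases "p = \<infinity>")
  case True
  have "EE f = EE g" using EE_AE[OF g _ ae] f True by (simp add: memLp_inf)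
  then show ?thesis using f g True by (auto simp: memLp_inf Lp_inf)
next
  case False
  then show ?thesis using f g II_AE[OF ae] NN_AE[OF ae] by (auto simp: memLp_fin Lp_fin)
qed

lemma G_zero:
  assumes p: "1 \<le> p" and f: "memLp p f" and z: "Lp_norm p f = 0"
  shows "AE x in lebesgue. f x = 0"
proof (cases "p = \<infinity>")
  case True
  then show ?thesis using f z EE_zero[of f] by (auto simp: memLp_inf Lp_inf)
next
  case False
  then show ?thesis using f z NN_zero[of f "enn2real p"] q_ge1[OF p False] by (auto simp: memLp_fin Lp_fin)
qed

lemma G_series:
  fixes h :: "nat \<Rightarrow> real \<Rightarrow> real"
  assumes p: "1 \<le> p" and h: "\<And>n. memLp p (h n)" and sm: "summable (\<lambda>n. Lp_norm p (h n))"
  shows "\<exists>S. memLp p S \<and> (\<forall>N. memLp p (\<lambda>x. S x - (\<Sum>n<N. h n x))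
            \<and> Lp_norm p (\<lambda>x. S x - (\<Sum>n<N. h n x)) \<le> (\<Sum>n. Lp_norm p (h (n + N))))"
proof -
  have "\<exists>S. S \<in> borel_measurable lebesgue \<and> (\<forall>N. memLp p (\<lambda>x. S x - (\<Sum>n<N. h n x))
            \<and> Lp_norm p (\<lambda>x. S x - (\<Sum>n<N. h n x)) \<le> (\<Sum>n. Lp_norm p (h (n + N))))"
  proof (cases "p = \<infinity>")
    case True
    have hm: "\<And>n. h n \<in> borel_measurable lebesgue" "\<And>n. EE (h n) < \<infinity>" using h True by (auto simp: memLp_inf)
    have sm': "summable (\<lambda>n. real_of_ereal (EE (h n)))" using sm True by (simp add: Lp_inf)
    from series_inf[of h, OF hm(1) hm(2) sm'] obtain S where S: "S \<in> borel_measurable lebesgue"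
      "\<forall>N. EE (\<lambda>x. S x - (\<Sum>n<N. h n x)) < \<infinity> \<and>
          real_of_ereal (EE (\<lambda>x. S x - (\<Sum>n<N. h n x))) \<le> (\<Sum>n. real_of_ereal (EE (h (n + N))))"
      by (auto simp: Lp_inf)
    have "(\<lambda>x. S x - (\<Sum>n<N. h n x)) \<in> borel_measurable lebesgue" for N using S(1) hm(1) by measurable
    then show ?thesis using S True by (auto simp: memLp_inf Lp_inf)
  next
    case False
    note q = q_ge1[OF p False]
    have hm: "\<And>n. h n \<in> borel_measurable lebesgue" "\<And>n. II (enn2real p) (h n) < \<infinity>" using h False by (auto simp: memLp_fin)
    have sm': "summable (\<lambda>n. NN (enn2real p) (h n))" using sm False by (simp add: Lp_fin)
    from series_fin[of h, OF hm(1) hm(2) q sm'] obtain S where S: "S \<in> borel_measurable lebesgue"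
      "\<forall>N. II (enn2real p) (\<lambda>x. S x - (\<Sum>n<N. h n x)) < \<infinity> \<and>
          NN (enn2real p) (\<lambda>x. S x - (\<Sum>n<N. h n x)) \<le> (\<Sum>n. NN (enn2real p) (h (n + N)))"
      by (auto simp: Lp_fin)
    have "(\<lambda>x. S x - (\<Sum>n<N. h n x)) \<in> borel_measurable lebesgue" for N using S(1) hm(1) by measurable
    then show ?thesis using S False by (auto simp: memLp_fin Lp_fin)
  qed
  then obtain S where S: "S \<in> borel_measurable lebesgue" "\<forall>N. memLp p (\<lambda>x. S x - (\<Sum>n<N. h n x))
            \<and> Lp_norm p (\<lambda>x. S x - (\<Sum>n<N. h n x)) \<le> (\<Sum>n. Lp_norm p (h (n + N)))" by blast
  have "memLp p S" using S(2)[rule_format, of 0] by simp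
  with S show ?thesis by blast
qed

lemma G_one:
  assumes p: "1 \<le> p"
  shows "\<exists>f. memLp p f \<and> Lp_norm p f = 1"
proof -
  define f :: "real \<Rightarrow> real" where "f = indicator {0..1}"
  have fm: "f \<in> borel_measurable lebesgue" unfolding f_def by (intro borel_measurable_indicator) auto
  show ?thesis
  proof (cases "p = \<infinity>")
    case True
    have ae: "AE x in lebesgue. \<bar>f x\<bar> \<le> 1" by (auto simp: f_def indicator_def)
    have fin: "EE f < \<infinity>" and le: "real_of_ereal (EE f) \<le> 1" using EE_le'[OF fm ae] by auto
    have "real_of_ereal (EE f) \<ge> 1"
    proof (rule ccontr)
      assume "\<not> real_of_ereal (EE f) \<ge> 1"
      then have lt: "real_of_ereal (EE f) < 1" by simp
      from EE_bound[OF fin] obtain N where N: "{x \<in> space lebesgue. \<not> \<bar>f x\<bar> \<le> real_of_ereal (EE f)} \<subseteq> N"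
        "emeasure lebesgue N = 0" "N \<in> sets lebesgue" by (rule AE_E)
      have "{0..1} \<subseteq> N" using N(1) lt by (auto simp: f_def)
      then have "emeasure lebesgue {0..(1::real)} \<le> emeasure lebesgue N"
        using N(3) by (intro emeasure_mono) auto
      with N(2) show False by simp
    qed
    then show ?thesis using fin le fm True by (intro exI[of _ f]) (auto simp: memLp_inf Lp_inf)
  next
    case False
    note q = q_ge1[OF p False]
    have eq: "(\<lambda>x. ennreal (\<bar>f x\<bar> powr enn2real p)) = indicator {0..1}"
      using q by (intro ext) (auto simp: f_def indicator_def)
    have "{0..1::real} \<in> sets lebesgue" by auto
    then have "II (enn2real p) f = 1" unfolding II_def eq by (simp add: nn_integral_indicator)
    then show ?thesis using fm False by (intro exI[of _ f]) (auto simp: memLp_fin Lp_fin NN_def)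
  qed
qed



lemma G_zero_fun: "1 \<le> p \<Longrightarrow> memLp p (\<lambda>x. 0) \<and> Lp_norm p (\<lambda>x. 0) = 0"
  using G_one[of p] G_cmult[of p _ 0] by auto

lemma G_diff:
  assumes p: "1 \<le> p" and f: "memLp p f" and g: "memLp p g"
  shows "memLp p (\<lambda>x. f x - g x) \<and> Lp_norm p (\<lambda>x. f x - g x) \<le> Lp_norm p f + Lp_norm p g"
proof -
  have g': "memLp p (\<lambda>x. (-1) * g x) \<and> Lp_norm p (\<lambda>x. (-1) * g x) = Lp_norm p g"
    using G_cmult[OF p g, of "-1"] by simp
  from G_add[OF p f g'[THEN conjunct1]] g' show ?thesis by simp
qed

lemma G_neg:
  assumes p: "1 \<le> p" and f: "memLp p f"
  shows "memLp p (\<lambda>x. - f x) \<and> Lp_norm p (\<lambda>x. - f x) = Lp_norm p f"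
  using G_cmult[OF p f, of "-1"] by simp

lemma T_props:
  assumes p: "1 \<le> p" and f: "memLp p f" and c: "c \<noteq> 0"
  shows "memLp p (Top c f) \<and> Lp_norm p (Top c f) = Lp_norm p f / bpow p c"
  unfolding Top_def using G_scale[OF p f c] .

lemma Tpow: "(Top c ^^ n) g = (\<lambda>x. g (c ^ n * x))"
  by (induction n) (auto simp: Top_def mult.assoc mult.commute)

lemma Tpow_props:
  assumes p: "1 \<le> p" and f: "memLp p f" and c: "c \<noteq> 0"
  shows "memLp p ((Top c ^^ n) f) \<and> Lp_norm p ((Top c ^^ n) f) = Lp_norm p f / bpow p c ^ n"
proof (induction n)
  case 0 then show ?case using f by simp
next
  case (Suc n)
  then show ?case using T_props[OF p _ c, of "(Top c ^^ n) f"] by (simp add: divide_divide_eq_left mult.commute)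
qed

lemma bpow_inv: "c \<noteq> 0 \<Longrightarrow> bpow p (1 / c) = 1 / bpow p c"
  by (simp add: bpow_def powr_divide)

lemma M_lin: "Mop a b f x - Mop a b g x = Mop a b (\<lambda>x. f x - g x) x"
  by (simp add: Mop_def Top_def algebra_simps)
lemma T_lin: "Top b f x - Top b g x = Top b (\<lambda>x. f x - g x) x"
  by (simp add: Top_def)

lemma M_props:
  assumes p: "1 \<le> p" and f: "memLp p f" and b: "b \<noteq> 0"
  shows "memLp p (Mop a b f)"
    "Lp_norm p (Mop a b f) \<le> (1 + \<bar>a\<bar> / bpow p b) * Lp_norm p f"
    "\<bar>1 - \<bar>a\<bar> / bpow p b\<bar> * Lp_norm p f \<le> Lp_norm p (Mop a b f)"
proof -
  let ?B = "bpow p b"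
  have B: "?B > 0" using bpow_pos[OF b] .
  note t = T_props[OF p f b]
  note at = G_cmult[OF p t[THEN conjunct1], of a]
  note nat = G_cmult[OF p t[THEN conjunct1], of "-a"]
  have eqM: "Mop a b f = (\<lambda>x. f x + (-a) * Top b f x)" by (simp add: Mop_def fun_eq_iff)
  note s = G_add[OF p f nat[THEN conjunct1]]
  show m: "memLp p (Mop a b f)" using s eqM by simp
  have "Lp_norm p (Mop a b f) \<le> Lp_norm p f + \<bar>a\<bar> * (Lp_norm p f / ?B)"
    using s eqM nat t by simp
  then show "Lp_norm p (Mop a b f) \<le> (1 + \<bar>a\<bar> / ?B) * Lp_norm p f"
    by (simp add: algebra_simps)
  have e1: "(\<lambda>x. Mop a b f x + a * Top b f x) = f" by (simp add: Mop_def fun_eq_iff)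
  have l1: "Lp_norm p f \<le> Lp_norm p (Mop a b f) + \<bar>a\<bar> * (Lp_norm p f / ?B)"
    using G_add[OF p m at[THEN conjunct1]] at t e1 by simp
  have e2: "(\<lambda>x. f x - Mop a b f x) = (\<lambda>x. a * Top b f x)" by (simp add: Mop_def fun_eq_iff)
  have l2: "\<bar>a\<bar> * (Lp_norm p f / ?B) \<le> Lp_norm p f + Lp_norm p (Mop a b f)"
    using G_diff[OF p f m] at t e2 by simp
  have "\<bar>a\<bar> * (Lp_norm p f / ?B) = \<bar>a\<bar> / ?B * Lp_norm p f" by simp
  then show "\<bar>1 - \<bar>a\<bar> / ?B\<bar> * Lp_norm p f \<le> Lp_norm p (Mop a b f)"
    using l1 l2 G_nonneg[of p f] by (auto simp: abs_if algebra_simps)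
qed

lemma homeo_abstract:
  assumes p: "1 \<le> p"
    and mem: "\<And>f. memLp p f \<Longrightarrow> memLp p (H f)"
    and lin: "\<And>f g x. H f x - H g x = H (\<lambda>x. f x - g x) x"
    and up: "\<And>f. memLp p f \<Longrightarrow> Lp_norm p (H f) \<le> C * Lp_norm p f"
    and low: "\<And>f. memLp p f \<Longrightarrow> c * Lp_norm p f \<le> Lp_norm p (H f)" and c: "c > 0"
    and ae: "\<And>f g. memLp p f \<Longrightarrow> memLp p g \<Longrightarrow> (AE x in lebesgue. f x = g x) \<Longrightarrow> (AE x in lebesgue. H f x = H g x)"
    and surj: "\<And>g. memLp p g \<Longrightarrow> \<exists>f. memLp p f \<and> (AE x in lebesgue. H f x = g x)"
  shows "Lp_homeomorphism p H"
  unfolding Lp_homeomorphism_def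
proof (intro conjI allI impI)
  show "memLp p f \<Longrightarrow> memLp p (H f)" for f by (rule mem)
  show "memLp p f \<Longrightarrow> memLp p g \<Longrightarrow> AE x in lebesgue. f x = g x \<Longrightarrow> AE x in lebesgue. H f x = H g x" for f g
    by (rule ae)
  show "\<exists>f. memLp p f \<and> (AE x in lebesgue. H f x = g x)" if "memLp p g" for g using surj that by blast
next
  fix f g assume f: "memLp p f" and g: "memLp p g" and h: "AE x in lebesgue. H f x = H g x"
  note d = G_diff[OF p f g]
  have hd: "memLp p (H (\<lambda>x. f x - g x))" using mem d by blast
  have "AE x in lebesgue. H (\<lambda>x. f x - g x) x = 0" using h by eventually_elim (simp add: lin[symmetric])
  then have "Lp_norm p (\<lambda>x. 0) = Lp_norm p (H (\<lambda>x. f x - g x))"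
    using G_AE[OF p hd] by auto
  then have "Lp_norm p (H (\<lambda>x. f x - g x)) = 0" using G_zero_fun[OF p] by simp
  then have "c * Lp_norm p (\<lambda>x. f x - g x) \<le> 0" using low[OF d[THEN conjunct1]] by simp
  then have "Lp_norm p (\<lambda>x. f x - g x) = 0"
    using c G_nonneg[of p "\<lambda>x. f x - g x"] by (simp add: mult_le_0_iff)
  then have "AE x in lebesgue. f x - g x = 0" using G_zero[OF p d[THEN conjunct1]] by simp
  then show "AE x in lebesgue. f x = g x" by eventually_elim simp
next
  fix fs f assume fs: "\<forall>n. memLp p (fs n)" and f: "memLp p f"
    and l: "(\<lambda>n. Lp_norm p (\<lambda>x. fs n x - f x)) \<longlonglongrightarrow> 0"
  show "(\<lambda>n. Lp_norm p (\<lambda>x. H (fs n) x - H f x)) \<longlonglongrightarrow> 0"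
  proof (rule Lim_null_comparison)
    show "\<forall>\<^sub>F n in sequentially. norm (Lp_norm p (\<lambda>x. H (fs n) x - H f x)) \<le> C * Lp_norm p (\<lambda>x. fs n x - f x)"
      using up G_diff[OF p _ f] fs G_nonneg by (auto simp: lin)
    show "(\<lambda>n. C * Lp_norm p (\<lambda>x. fs n x - f x)) \<longlonglongrightarrow> 0"
      using tendsto_mult_right_zero[OF l] by simp
  qed
next
  fix fs f assume fs: "\<forall>n. memLp p (fs n)" and f: "memLp p f"
    and l: "(\<lambda>n. Lp_norm p (\<lambda>x. H (fs n) x - H f x)) \<longlonglongrightarrow> 0"
  show "(\<lambda>n. Lp_norm p (\<lambda>x. fs n x - f x)) \<longlonglongrightarrow> 0"
  proof (rule Lim_null_comparison)
    have "c * Lp_norm p (\<lambda>x. fs n x - f x) \<le> Lp_norm p (\<lambda>x. H (fs n) x - H f x)" for n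
      using low G_diff[OF p _ f] fs by (auto simp: lin)
    then have "Lp_norm p (\<lambda>x. fs n x - f x) \<le> (1/c) * Lp_norm p (\<lambda>x. H (fs n) x - H f x)" for n
      using c by (simp add: field_simps)
    then show "\<forall>\<^sub>F n in sequentially. norm (Lp_norm p (\<lambda>x. fs n x - f x)) \<le> (1/c) * Lp_norm p (\<lambda>x. H (fs n) x - H f x)"
      using G_nonneg by auto
    show "(\<lambda>n. (1/c) * Lp_norm p (\<lambda>x. H (fs n) x - H f x)) \<longlonglongrightarrow> 0"
      using tendsto_divide_zero[OF l, of c] by simp
  qed
qed



lemma geom_tendsto: "0 \<le> (r::real) \<Longrightarrow> r < 1 \<Longrightarrow> (\<lambda>N. D * r ^ N) \<longlonglongrightarrow> 0"
  by (intro tendsto_mult_right_zero LIMSEQ_power_zero) simp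

lemma le_geom_zero:
  fixes x :: real
  assumes "\<And>N. x \<le> D * r ^ N" "0 \<le> r" "r < 1"
  shows "x \<le> 0"
  using LIMSEQ_le_const[OF geom_tendsto[OF assms(2,3), of D]] assms(1) by blast

lemma op_norm_le:
  assumes p: "1 \<le> p" and bd: "\<And>f. memLp p f \<Longrightarrow> Lp_norm p f = 1 \<Longrightarrow> Lp_norm p (H f) \<le> K"
  shows "0 \<le> op_norm p H \<and> op_norm p H \<le> K"
proof -
  let ?S = "{Lp_norm p (H f) | f. memLp p f \<and> Lp_norm p f = 1}"
  obtain f0 where f0: "memLp p f0" "Lp_norm p f0 = 1" using G_one[OF p] by blast
  have ne: "?S \<noteq> {}" using f0 by blast
  have ub: "\<And>y. y \<in> ?S \<Longrightarrow> y \<le> K" using bd by blast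
  have "Sup ?S \<le> K" by (rule cSup_least[OF ne]) (use ub in blast)
  moreover have "0 \<le> Sup ?S"
    by (rule cSup_upper2[of "Lp_norm p (H f0)"]) (use f0 G_nonneg ub in \<open>auto simp: bdd_above_def\<close>)
  ultimately show ?thesis by (simp add: op_norm_def)
qed

lemma inverse_abstract:
  fixes h :: "(real \<Rightarrow> real) \<Rightarrow> nat \<Rightarrow> real \<Rightarrow> real"
    and e :: "(real \<Rightarrow> real) \<Rightarrow> nat \<Rightarrow> real \<Rightarrow> real"
  assumes p: "1 \<le> p" and b: "b \<noteq> 0" and r: "0 \<le> r" "r < 1" and K: "K \<ge> 0" and KK: "KK \<ge> 0"
    and hm: "\<And>g n. memLp p g \<Longrightarrow> memLp p (h g n)"
    and hn: "\<And>g n. memLp p g \<Longrightarrow> Lp_norm p (h g n) = K * r ^ n * Lp_norm p g"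
    and tele: "\<And>g N x. Mop a b (\<lambda>x. \<Sum>n<N. h g n x) x - g x = e g N x"
    and em: "\<And>g N. memLp p g \<Longrightarrow> memLp p (e g N) \<and> Lp_norm p (e g N) \<le> KK * r ^ N * Lp_norm p g"
  shows "\<exists>R. (\<forall>g. memLp p g \<longrightarrow> memLp p (R g) \<and> (AE x in lebesgue. Mop a b (R g) x = g x))
            \<and> (\<lambda>N. op_norm p (\<lambda>g x. (\<Sum>n<N. h g n x) - R g x)) \<longlonglongrightarrow> 0"
proof -
  define D where "D = K / (1 - r)"
  have D: "D \<ge> 0" using K r by (simp add: D_def)
  define P where "P g S \<longleftrightarrow> memLp p S \<and> (\<forall>N. memLp p (\<lambda>x. S x - (\<Sum>n<N. h g n x))
            \<and> Lp_norm p (\<lambda>x. S x - (\<Sum>n<N. h g n x)) \<le> (\<Sum>n. Lp_norm p (h g (n + N))))" for g S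
  define R where "R g = (if memLp p g then (SOME S. P g S) else (\<lambda>x. 0))" for g
  have sg: "summable (\<lambda>n. K * Lp_norm p g * r ^ n)" for g using r by (intro summable_mult summable_geometric) simp
  have PR: "P g (R g)" if g: "memLp p g" for g
  proof -
    have "summable (\<lambda>n. Lp_norm p (h g n))" using sg hn[OF g] by (simp add: mult_ac)
    then have "\<exists>S. P g S" unfolding P_def by (rule G_series[OF p hm[OF g]])
    from someI_ex[OF this] show ?thesis using g unfolding R_def by simp
  qed
  have tail: "(\<Sum>n. Lp_norm p (h g (n + N))) = D * r ^ N * Lp_norm p g" if g: "memLp p g" for g N
  proof -
    have "(\<Sum>n. Lp_norm p (h g (n + N))) = (\<Sum>n. (K * r ^ N * Lp_norm p g) * r ^ n)"
      using hn[OF g] by (simp add: power_add mult_ac)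
    also have "\<dots> = (K * r ^ N * Lp_norm p g) * (1 / (1 - r))"
      using r by (subst suminf_mult) (auto simp: suminf_geometric)
    finally show ?thesis by (simp add: D_def)
  qed
  have Rb: "memLp p (R g) \<and> memLp p (\<lambda>x. R g x - (\<Sum>n<N. h g n x)) \<and>
      Lp_norm p (\<lambda>x. R g x - (\<Sum>n<N. h g n x)) \<le> D * r ^ N * Lp_norm p g" if g: "memLp p g" for g N
    using PR[OF g] tail[OF g] unfolding P_def by auto
  have MR: "memLp p (R g) \<and> (AE x in lebesgue. Mop a b (R g) x = g x)" if g: "memLp p g" for g
  proof -
    have mR: "memLp p (R g)" using Rb[OF g] by blast
    note mM = M_props(1)[OF p mR b, of a]
    define F where "F = (\<lambda>x. Mop a b (R g) x - g x)"
    have mF: "memLp p F" unfolding F_def using G_diff[OF p mM g] by blast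
    define C where "C = 1 + \<bar>a\<bar> / bpow p b"
    have "Lp_norm p F \<le> (C * D + KK) * Lp_norm p g * r ^ N" for N
    proof -
      let ?d = "\<lambda>x. R g x - (\<Sum>n<N. h g n x)"
      have md: "memLp p ?d" using Rb[OF g] by blast
      have Fe: "F = (\<lambda>x. Mop a b ?d x + e g N x)"
      proof (rule ext)
        fix x
        have A: "Mop a b (R g) x - Mop a b (\<lambda>x. \<Sum>n<N. h g n x) x = Mop a b ?d x" by (rule M_lin)
        have B: "Mop a b (\<lambda>x. \<Sum>n<N. h g n x) x - g x = e g N x" by (rule tele)
        show "F x = Mop a b ?d x + e g N x" unfolding F_def using A B by linarith
      qed
      have "Lp_norm p F \<le> Lp_norm p (Mop a b ?d) + Lp_norm p (e g N)"
        unfolding Fe using G_add[OF p M_props(1)[OF p md b] em[OF g, THEN conjunct1]] by blast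
      also have "\<dots> \<le> C * Lp_norm p ?d + KK * r ^ N * Lp_norm p g"
        using M_props(2)[OF p md b, of a] em[OF g, of N] by (simp add: C_def)
      also have "\<dots> \<le> C * (D * r ^ N * Lp_norm p g) + KK * r ^ N * Lp_norm p g"
      proof -
        have "0 \<le> C" using bpow_pos[OF b, of p] by (simp add: C_def)
        then show ?thesis using Rb[OF g, of N] by (auto intro!: mult_left_mono)
      qed
      finally show ?thesis by (simp add: algebra_simps)
    qed
    then have "Lp_norm p F \<le> 0" using r by (intro le_geom_zero) auto
    then have "Lp_norm p F = 0" using G_nonneg[of p F] by simp
    then have "AE x in lebesgue. F x = 0" using G_zero[OF p mF] by simp
    then show ?thesis using mR by (auto simp: F_def elim!: eventually_mono)
  qed
  have opb: "0 \<le> op_norm p (\<lambda>g x. (\<Sum>n<N. h g n x) - R g x) \<and> op_norm p (\<lambda>g x. (\<Sum>n<N. h g n x) - R g x) \<le> D * r ^ N" for N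
  proof (rule op_norm_le[OF p])
    fix f assume f: "memLp p f" "Lp_norm p f = 1"
    have eq: "(\<lambda>x. (\<Sum>n<N. h f n x) - R f x) = (\<lambda>x. - (R f x - (\<Sum>n<N. h f n x)))" by auto
    show "Lp_norm p (\<lambda>x. (\<Sum>n<N. h f n x) - R f x) \<le> D * r ^ N"
      unfolding eq using G_neg[OF p, of "\<lambda>x. R f x - (\<Sum>n<N. h f n x)"] Rb[OF f(1), of N] f(2) by simp
  qed
  have "(\<lambda>N. op_norm p (\<lambda>g x. (\<Sum>n<N. h g n x) - R g x)) \<longlonglongrightarrow> 0"
  proof (rule Lim_null_comparison)
    show "\<forall>\<^sub>F N in sequentially. norm (op_norm p (\<lambda>g x. (\<Sum>n<N. h g n x) - R g x)) \<le> D * r ^ N"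
      using opb by auto
  qed (rule geom_tendsto[OF r])
  with MR show ?thesis by blast
qed



lemma tele1: "Mop a b (\<lambda>x. \<Sum>n<N. a ^ n * (Top b ^^ n) g x) x - g x = - (a ^ N * (Top b ^^ N) g x)"
proof -
  define F where "F n = a ^ n * g (b ^ n * x)" for n
  have 2: "a * (\<Sum>n<N. a ^ n * g (b ^ n * (b * x))) = (\<Sum>n<N. F (Suc n))"
    by (simp add: F_def sum_distrib_left mult_ac)
  have "Mop a b (\<lambda>x. \<Sum>n<N. a ^ n * (Top b ^^ n) g x) x = (\<Sum>n<N. F n) - (\<Sum>n<N. F (Suc n))"
    unfolding Mop_def Tpow Top_def 2[symmetric] by (simp add: F_def)
  also have "\<dots> = F 0 - F N" by (simp add: sum_subtractf[symmetric] sum_lessThan_telescope')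
  finally show ?thesis by (simp add: F_def Tpow)
qed

lemma tele2:
  assumes a: "a \<noteq> 0" and b: "b \<noteq> 0"
  shows "Mop a b (\<lambda>x. \<Sum>n<N. - ((1/a) ^ Suc n * (Top (1/b) ^^ Suc n) g x)) x - g x
           = - ((1/a) ^ N * (Top (1/b) ^^ N) g x)"
proof -
  define F where "F n = (1/a) ^ n * g ((1/b) ^ n * x)" for n
  have 2: "a * (1/a) ^ Suc n * g ((1/b) ^ Suc n * (b * x)) = F n" for n
    using a b by (simp add: F_def mult_ac)
  have "Mop a b (\<lambda>x. \<Sum>n<N. - ((1/a) ^ Suc n * (Top (1/b) ^^ Suc n) g x)) x
        = (\<Sum>n<N. F n) - (\<Sum>n<N. F (Suc n))"
    unfolding Mop_def Tpow Top_def
    by (simp add: F_def sum_negf sum_distrib_left 2[unfolded F_def, symmetric] mult.assoc del: power_Suc)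
  also have "\<dots> = F 0 - F N" by (simp add: sum_subtractf[symmetric] sum_lessThan_telescope')
  finally show ?thesis by (simp add: F_def Tpow)
qed



theorem theorem3p2:
  fixes p :: ennreal and a b :: real
  assumes "1 \<le> p" and "b \<noteq> 0" and "\<bar>a\<bar> \<noteq> bpow p b"
  shows "Lp_homeomorphism p (Top b) \<and> Lp_homeomorphism p (Mop a b)
    \<and> (\<forall>f. Top (1 / b) (Top b f) = f \<and> Top b (Top (1 / b) f) = f)
    \<and> op_norm p (Top b) = 1 / bpow p b
    \<and> (\<forall>f. memLp p f \<longrightarrow>
          \<bar>1 - \<bar>a\<bar> / bpow p b\<bar> * Lp_norm p f \<le> Lp_norm p (Mop a b f) \<and>
          Lp_norm p (Mop a b f) \<le> (1 + \<bar>a\<bar> / bpow p b) * Lp_norm p f)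
    \<and> (\<bar>a\<bar> < bpow p b \<longrightarrow>
         (\<exists>R. (\<forall>g. memLp p g \<longrightarrow> memLp p (R g) \<and> (AE x in lebesgue. Mop a b (R g) x = g x))
            \<and> (\<lambda>N. op_norm p (\<lambda>g x. (\<Sum>n<N. a ^ n * (Top b ^^ n) g x) - R g x)) \<longlonglongrightarrow> 0))
    \<and> (\<bar>a\<bar> > bpow p b \<longrightarrow>
         (\<exists>R. (\<forall>g. memLp p g \<longrightarrow> memLp p (R g) \<and> (AE x in lebesgue. Mop a b (R g) x = g x))
            \<and> (\<lambda>N. op_norm p (\<lambda>g x. - (\<Sum>n\<in>{1..N}. (1 / a) ^ n * (Top (1 / b) ^^ n) g x) - R g x))
                 \<longlonglongrightarrow> 0))"
proof -
  note p = assms(1) and b = assms(2) and ab = assms(3)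
  define B where "B = bpow p b"
  have B: "B > 0" unfolding B_def by (rule bpow_pos[OF b])
  have inv: "\<forall>f. Top (1 / b) (Top b f) = f \<and> Top b (Top (1 / b) f) = f"
    using b by (simp add: Top_def)
  have bounds: "\<forall>f. memLp p f \<longrightarrow>
          \<bar>1 - \<bar>a\<bar> / bpow p b\<bar> * Lp_norm p f \<le> Lp_norm p (Mop a b f) \<and>
          Lp_norm p (Mop a b f) \<le> (1 + \<bar>a\<bar> / bpow p b) * Lp_norm p f"
    using M_props[OF p _ b] by blast
  have opT: "op_norm p (Top b) = 1 / B"
  proof -
    have "{Lp_norm p (Top b f) | f. memLp p f \<and> Lp_norm p f = 1} = {1 / B}"
    proof (intro set_eqI iffI)
      fix y assume "y \<in> {Lp_norm p (Top b f) | f. memLp p f \<and> Lp_norm p f = 1}"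
      then show "y \<in> {1 / B}" using T_props[OF p _ b] by (auto simp: B_def)
    next
      fix y assume "y \<in> {1 / B}"
      obtain f0 where f0: "memLp p f0" "Lp_norm p f0 = 1" using G_one[OF p] by blast
      have "Lp_norm p (Top b f0) = 1 / B" using T_props[OF p f0(1) b] f0(2) by (simp add: B_def)
      then show "y \<in> {Lp_norm p (Top b f) | f. memLp p f \<and> Lp_norm p f = 1}"
        using \<open>y \<in> {1 / B}\<close> f0 by (intro CollectI exI[of _ f0]) auto
    qed
    then show ?thesis by (simp add: op_norm_def)
  qed
  have case1: "\<bar>a\<bar> < B \<Longrightarrow>
         (\<exists>R. (\<forall>g. memLp p g \<longrightarrow> memLp p (R g) \<and> (AE x in lebesgue. Mop a b (R g) x = g x))
            \<and> (\<lambda>N. op_norm p (\<lambda>g x. (\<Sum>n<N. a ^ n * (Top b ^^ n) g x) - R g x)) \<longlonglongrightarrow> 0)"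
  proof -
    assume lt: "\<bar>a\<bar> < B"
    define r where "r = \<bar>a\<bar> / B"
    have r: "0 \<le> r" "r < 1" using lt B by (auto simp: r_def)
    have nT: "memLp p ((Top b ^^ n) g) \<and> Lp_norm p ((Top b ^^ n) g) = Lp_norm p g / B ^ n"
      if "memLp p g" for g n using Tpow_props[OF p that b] by (simp add: B_def)
    show ?thesis
    proof (rule inverse_abstract[where h = "\<lambda>g n x. a ^ n * (Top b ^^ n) g x"
          and e = "\<lambda>g N x. - (a ^ N * (Top b ^^ N) g x)" and K = 1 and KK = 1 and r = r, OF p b r])
      fix g n assume g: "memLp p g"
      show "memLp p (\<lambda>x. a ^ n * (Top b ^^ n) g x)" using G_cmult[OF p nT[OF g, THEN conjunct1]] by blast
      show "Lp_norm p (\<lambda>x. a ^ n * (Top b ^^ n) g x) = 1 * r ^ n * Lp_norm p g"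
        using G_cmult[OF p nT[OF g, THEN conjunct1], of "a ^ n"] nT[OF g]
        by (simp add: r_def power_abs power_divide)
    next
      fix g N assume g: "memLp p g"
      have c: "memLp p (\<lambda>x. a ^ N * (Top b ^^ N) g x) \<and> Lp_norm p (\<lambda>x. a ^ N * (Top b ^^ N) g x) = 1 * r ^ N * Lp_norm p g"
        using G_cmult[OF p nT[OF g, THEN conjunct1], of "a ^ N"] nT[OF g]
        by (simp add: r_def power_abs power_divide)
      show "memLp p (\<lambda>x. - (a ^ N * (Top b ^^ N) g x)) \<and> Lp_norm p (\<lambda>x. - (a ^ N * (Top b ^^ N) g x)) \<le> 1 * r ^ N * Lp_norm p g"
        using G_neg[OF p c[THEN conjunct1]] c by simp
    next
      fix g N x
      show "Mop a b (\<lambda>x. \<Sum>n<N. a ^ n * (Top b ^^ n) g x) x - g x = - (a ^ N * (Top b ^^ N) g x)"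
        by (rule tele1)
    qed auto
  qed
  have case2: "\<bar>a\<bar> > B \<Longrightarrow>
         (\<exists>R. (\<forall>g. memLp p g \<longrightarrow> memLp p (R g) \<and> (AE x in lebesgue. Mop a b (R g) x = g x))
            \<and> (\<lambda>N. op_norm p (\<lambda>g x. - (\<Sum>n\<in>{1..N}. (1 / a) ^ n * (Top (1 / b) ^^ n) g x) - R g x)) \<longlonglongrightarrow> 0)"
  proof -
    assume gt: "\<bar>a\<bar> > B"
    have a: "a \<noteq> 0" using gt B by auto
    have b': "1 / b \<noteq> 0" using b by simp
    define r where "r = B / \<bar>a\<bar>"
    have r: "0 \<le> r" "r < 1" using gt B by (auto simp: r_def)
    have nT: "memLp p ((Top (1/b) ^^ n) g) \<and> Lp_norm p ((Top (1/b) ^^ n) g) = Lp_norm p g * B ^ n"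
      if "memLp p g" for g n using Tpow_props[OF p that b', of n] by (simp add: B_def bpow_inv[OF b] power_divide)
    have c: "memLp p (\<lambda>x. (1/a) ^ n * (Top (1/b) ^^ n) g x) \<and> Lp_norm p (\<lambda>x. (1/a) ^ n * (Top (1/b) ^^ n) g x) = r ^ n * Lp_norm p g"
      if g: "memLp p g" for g n
      using G_cmult[OF p nT[OF g, THEN conjunct1], of "(1/a) ^ n"] nT[OF g]
      by (simp add: r_def power_abs power_divide)
    have ex: "\<exists>R. (\<forall>g. memLp p g \<longrightarrow> memLp p (R g) \<and> (AE x in lebesgue. Mop a b (R g) x = g x))
            \<and> (\<lambda>N. op_norm p (\<lambda>g x. (\<Sum>n<N. - ((1/a) ^ Suc n * (Top (1/b) ^^ Suc n) g x)) - R g x)) \<longlonglongrightarrow> 0"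
    proof (rule inverse_abstract[where h = "\<lambda>g n x. - ((1/a) ^ Suc n * (Top (1/b) ^^ Suc n) g x)"
          and e = "\<lambda>g N x. - ((1/a) ^ N * (Top (1/b) ^^ N) g x)" and K = r and KK = 1 and r = r, OF p b r])
      fix g n assume g: "memLp p g"
      show "memLp p (\<lambda>x. - ((1/a) ^ Suc n * (Top (1/b) ^^ Suc n) g x))"
        using G_neg[OF p c[OF g, THEN conjunct1]] by blast
      show "Lp_norm p (\<lambda>x. - ((1/a) ^ Suc n * (Top (1/b) ^^ Suc n) g x)) = r * r ^ n * Lp_norm p g"
      proof -
        note cs = c[OF g, of "Suc n"]
        have eq1: "Lp_norm p (\<lambda>x. - ((1/a) ^ Suc n * (Top (1/b) ^^ Suc n) g x)) = Lp_norm p (\<lambda>x. (1/a) ^ Suc n * (Top (1/b) ^^ Suc n) g x)"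
          by (rule G_neg[OF p cs[THEN conjunct1], THEN conjunct2])
        from eq1 cs[THEN conjunct2] have "Lp_norm p (\<lambda>x. - ((1/a) ^ Suc n * (Top (1/b) ^^ Suc n) g x)) = r ^ Suc n * Lp_norm p g"
          by (rule trans)
        then show ?thesis by (simp only: power_Suc mult.assoc)
      qed
    next
      fix g N assume g: "memLp p g"
      show "memLp p (\<lambda>x. - ((1/a) ^ N * (Top (1/b) ^^ N) g x)) \<and> Lp_norm p (\<lambda>x. - ((1/a) ^ N * (Top (1/b) ^^ N) g x)) \<le> 1 * r ^ N * Lp_norm p g"
        using G_neg[OF p c[OF g, THEN conjunct1]] c[OF g, of N] by simp
    next
      fix g N x
      show "Mop a b (\<lambda>x. \<Sum>n<N. - ((1/a) ^ Suc n * (Top (1/b) ^^ Suc n) g x)) x - g x = - ((1/a) ^ N * (Top (1/b) ^^ N) g x)"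
        by (rule tele2[OF a b])
    qed (use r in auto)
    have eq: "(\<lambda>g x. - (\<Sum>n\<in>{1..N}. (1 / a) ^ n * (Top (1 / b) ^^ n) g x) - R g x)
            = (\<lambda>g x. (\<Sum>n<N. - ((1/a) ^ Suc n * (Top (1/b) ^^ Suc n) g x)) - R g x)" for N R
    proof -
      have "(\<Sum>n\<in>{1..N}. (1 / a) ^ n * (Top (1 / b) ^^ n) g x) = (\<Sum>n<N. (1/a) ^ Suc n * (Top (1/b) ^^ Suc n) g x)" for g x
        using sum.atLeast1_atMost_eq[of "\<lambda>n. (1 / a) ^ n * (Top (1 / b) ^^ n) g x" N] by simp
      then show ?thesis by (simp add: sum_negf)
    qed
    show ?thesis using ex unfolding eq .
  qed
  have hT: "Lp_homeomorphism p (Top b)"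
  proof (rule homeo_abstract[OF p, where C = "1/B" and c = "1/B"])
    show "memLp p (Top b f)" if "memLp p f" for f using T_props[OF p that b] by blast
    show "Top b f x - Top b g x = Top b (\<lambda>x. f x - g x) x" for f g x by (rule T_lin)
    show "Lp_norm p (Top b f) \<le> 1 / B * Lp_norm p f" if "memLp p f" for f
      using T_props[OF p that b] by (simp add: B_def)
    show "1 / B * Lp_norm p f \<le> Lp_norm p (Top b f)" if "memLp p f" for f
      using T_props[OF p that b] by (simp add: B_def)
    show "0 < 1 / B" using B by simp
    show "AE x in lebesgue. Top b f x = Top b g x" if "AE x in lebesgue. f x = g x" for f g
      unfolding Top_def using AE_scale[OF b that] .
    show "\<exists>f. memLp p f \<and> (AE x in lebesgue. Top b f x = g x)" if "memLp p g" for g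
      using T_props[OF p that, of "1/b"] b inv by (intro exI[of _ "Top (1/b) g"]) auto
  qed
  have surjM: "\<exists>R. (\<forall>g. memLp p g \<longrightarrow> memLp p (R g) \<and> (AE x in lebesgue. Mop a b (R g) x = g x))"
  proof (cases "\<bar>a\<bar> < B")
    case True then show ?thesis using case1 by blast
  next
    case False then have "\<bar>a\<bar> > B" using ab by (auto simp: B_def)
    then show ?thesis using case2 by blast
  qed
  have hM: "Lp_homeomorphism p (Mop a b)"
  proof (rule homeo_abstract[OF p, where C = "1 + \<bar>a\<bar> / B" and c = "\<bar>1 - \<bar>a\<bar> / B\<bar>"])
    show "memLp p (Mop a b f)" if "memLp p f" for f using M_props(1)[OF p that b] .
    show "Mop a b f x - Mop a b g x = Mop a b (\<lambda>x. f x - g x) x" for f g x by (rule M_lin)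
    show "Lp_norm p (Mop a b f) \<le> (1 + \<bar>a\<bar> / B) * Lp_norm p f" if "memLp p f" for f
      using M_props(2)[OF p that b] by (simp add: B_def)
    show "\<bar>1 - \<bar>a\<bar> / B\<bar> * Lp_norm p f \<le> Lp_norm p (Mop a b f)" if "memLp p f" for f
      using M_props(3)[OF p that b] by (simp add: B_def)
    show "0 < \<bar>1 - \<bar>a\<bar> / B\<bar>" using ab B by (auto simp: B_def field_simps)
    show "AE x in lebesgue. Mop a b f x = Mop a b g x" if "AE x in lebesgue. f x = g x" for f g
      using that AE_scale[OF b that] by eventually_elim (simp add: Mop_def Top_def)
    show "\<exists>f. memLp p f \<and> (AE x in lebesgue. Mop a b f x = g x)" if "memLp p g" for g
      using surjM that by blast
  qed
  show ?thesis using hT hM inv opT bounds case1 case2 by (simp add: B_def)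
qed


end
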